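(* Let $G$ be a simple connected graph and let $v$ be an eigenvector of $\mathcal M$ with $\mathcal Mv=\mu v$, $\mu>0$, $\|v\|_2=1$. Let $S=\{i: v_i\ge0\}$. If $$\mu>\frac{(\mathrm{vol}\, S)^2+(\mathrm{vol}\, \bar S)^2}{\mathrm{vol}\, V}\,\max_{i\in V}\frac{v_i^2}{d_i},$$ then $Q(S)>0$.
   Context: $G=(V,E)$ is a finite, undirected, unweighted, simple connected graph with adjacency matrix $A$, degrees $d_i$, $D=\mathrm{Diag}(d_i)$, $\delta=(\sqrt{d_i})_i$, $\mathrm{vol}\, S=\sum_{i\in S}d_i$, $\bar S=V\setminus S$, $\mathbb 1_S$ the characteristic vector of $S$. $\mathcal M=D^{-1/2}AD^{-1/2}-\frac{1}{\mathrm{vol}\, V}\delta\delta^{\mathsf T}$. The modularity of $S$ is $Q(S)=\mathbb 1_S^{\mathsf T}A\mathbb 1_S-(\mathrm{vol}\, S)^2/\mathrm{vol}\, V$. *)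

theory Defs
  imports Main "HOL-Library.Extended_Nat" Complex_Main
begin

definition simple_graph :: "'a set \<Rightarrow> ('a \<Rightarrow> 'a \<Rightarrow> bool) \<Rightarrow> bool" where
  "simple_graph V E \<longleftrightarrow> finite V \<and> V \<noteq> {} \<and>
     (\<forall>x y. E x y \<longrightarrow> x \<in> V \<and> y \<in> V) \<and>
     (\<forall>x y. E x y \<longrightarrow> E y x) \<and> (\<forall>x. \<not> E x x)"

definition connected_graph :: "'a set \<Rightarrow> ('a \<Rightarrow> 'a \<Rightarrow> bool) \<Rightarrow> bool" where
  "connected_graph V E \<longleftrightarrow> simple_graph V E \<and> (\<forall>x\<in>V. \<forall>y\<in>V. E\<^sup>*\<^sup>* x y)"

definition adj :: "('a \<Rightarrow> 'a \<Rightarrow> bool) \<Rightarrow> 'a \<Rightarrow> 'a \<Rightarrow> real" where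
  "adj E i j = (if E i j then 1 else 0)"

definition deg :: "'a set \<Rightarrow> ('a \<Rightarrow> 'a \<Rightarrow> bool) \<Rightarrow> 'a \<Rightarrow> real" where
  "deg V E i = (\<Sum>j\<in>V. adj E i j)"

definition vol :: "'a set \<Rightarrow> ('a \<Rightarrow> 'a \<Rightarrow> bool) \<Rightarrow> 'a set \<Rightarrow> real" where
  "vol V E S = (\<Sum>i\<in>S. deg V E i)"

text \<open>The matrix M = D^{-1/2} A D^{-1/2} - (1 / vol V) delta delta^T, delta_i = sqrt d_i.\<close>
definition modmat :: "'a set \<Rightarrow> ('a \<Rightarrow> 'a \<Rightarrow> bool) \<Rightarrow> 'a \<Rightarrow> 'a \<Rightarrow> real" where
  "modmat V E i j = adj E i j / (sqrt (deg V E i) * sqrt (deg V E j))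
      - sqrt (deg V E i) * sqrt (deg V E j) / vol V E V"

definition modularity :: "'a set \<Rightarrow> ('a \<Rightarrow> 'a \<Rightarrow> bool) \<Rightarrow> 'a set \<Rightarrow> real" where
  "modularity V E S = (\<Sum>i\<in>S. \<Sum>j\<in>S. adj E i j) - (vol V E S)^2 / vol V E V"

end

theory Submission
  imports Defs
begin

lemma adj_cases: "adj E i j = 0 \<or> adj E i j = 1" by (simp add: adj_def)
lemma adj_nonneg: "adj E i j \<ge> 0" by (simp add: adj_def)
lemma adj_nz: "adj E i j \<noteq> 0 \<Longrightarrow> E i j" by (simp add: adj_def split: if_splits)
lemma adj_sym: "simple_graph V E \<Longrightarrow> adj E i j = adj E j i"
  unfolding adj_def simple_graph_def by metis
lemma deg_nonneg: "deg V E i \<ge> 0" unfolding deg_def by (simp add: sum_nonneg adj_nonneg)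
lemma deg_ge1: assumes "simple_graph V E" "E i j" shows "deg V E i \<ge> 1"
proof -
  have "j \<in> V" "finite V" using assms unfolding simple_graph_def by auto
  then have "adj E i j \<le> deg V E i" unfolding deg_def
    by (intro member_le_sum) (auto simp: adj_nonneg)
  then show ?thesis using assms(2) by (simp add: adj_def)
qed

lemma modmat_sym: "simple_graph V E \<Longrightarrow> modmat V E i j = modmat V E j i"
  unfolding modmat_def using adj_sym[of V E i j] by (simp add: mult.commute)

lemma modmat_term:
  assumes g: "simple_graph V E"
  shows "modmat V E j i * sqrt (deg V E i) =
     adj E j i / sqrt (deg V E j) - sqrt (deg V E j) * deg V E i / vol V E V"
proof (cases "adj E j i = 0")
  case True
  have "sqrt (deg V E i) * sqrt (deg V E i) = deg V E i" using deg_nonneg[of V E i] by simp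
  then show ?thesis using True unfolding modmat_def by (simp add: algebra_simps)
next
  case False
  then have "E j i" by (rule adj_nz)
  then have a: "adj E j i = 1" by (simp add: adj_def)
  have "deg V E j \<ge> 1" using deg_ge1[OF g \<open>E j i\<close>] .
  moreover have "E i j" using g \<open>E j i\<close> unfolding simple_graph_def by blast
  then have "deg V E i \<ge> 1" using deg_ge1[OF g] by blast
  ultimately have p1: "sqrt (deg V E j) > 0" and p2: "sqrt (deg V E i) > 0" by auto
  have "sqrt (deg V E i) * sqrt (deg V E i) = deg V E i" using deg_nonneg[of V E i] by simp
  then show ?thesis unfolding modmat_def a using p1 p2
    by (simp add: field_simps)
qed

lemma modmat_delta:
  assumes g: "simple_graph V E" and j: "j \<in> V"
  shows "(\<Sum>i\<in>V. modmat V E j i * sqrt (deg V E i)) = 0"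
proof -
  have "(\<Sum>i\<in>V. modmat V E j i * sqrt (deg V E i)) =
     (\<Sum>i\<in>V. adj E j i / sqrt (deg V E j) - sqrt (deg V E j) * deg V E i / vol V E V)"
    using modmat_term[OF g] by simp
  also have "\<dots> = deg V E j / sqrt (deg V E j) - sqrt (deg V E j) * vol V E V / vol V E V"
    unfolding sum_subtractf deg_def[of V E j] vol_def
    by (simp add: sum_divide_distrib sum_distrib_left deg_def)
  also have "\<dots> = 0"
  proof (cases "deg V E j = 0")
    case True then show ?thesis by simp
  next
    case False
    have fin: "finite V" using g unfolding simple_graph_def by auto
    have "deg V E j \<le> vol V E V" unfolding vol_def
      using fin j by (intro member_le_sum) (auto simp: deg_nonneg)
    then have "vol V E V > 0" using False deg_nonneg[of V E j] by linarith
    moreover have "deg V E j / sqrt (deg V E j) = sqrt (deg V E j)"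
      using False deg_nonneg[of V E j] by (metis real_div_sqrt)
    ultimately show ?thesis by simp
  qed
  finally show ?thesis .
qed

lemma orth:
  assumes g: "simple_graph V E"
    and eig: "\<forall>i\<in>V. (\<Sum>j\<in>V. modmat V E i j * v j) = \<mu> * v i"
    and mu: "\<mu> > 0"
  shows "(\<Sum>i\<in>V. sqrt (deg V E i) * v i) = 0"
proof -
  have "\<mu> * (\<Sum>i\<in>V. sqrt (deg V E i) * v i) = (\<Sum>i\<in>V. sqrt (deg V E i) * (\<mu> * v i))"
    by (simp add: sum_distrib_left algebra_simps)
  also have "\<dots> = (\<Sum>i\<in>V. sqrt (deg V E i) * (\<Sum>j\<in>V. modmat V E i j * v j))"
    using eig by simp
  also have "\<dots> = (\<Sum>i\<in>V. \<Sum>j\<in>V. sqrt (deg V E i) * modmat V E i j * v j)"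
    by (simp add: sum_distrib_left algebra_simps)
  also have "\<dots> = (\<Sum>j\<in>V. \<Sum>i\<in>V. sqrt (deg V E i) * modmat V E i j * v j)"
    by (rule sum.swap)
  also have "\<dots> = (\<Sum>j\<in>V. v j * (\<Sum>i\<in>V. modmat V E j i * sqrt (deg V E i)))"
    using modmat_sym[OF g] by (simp add: sum_distrib_left algebra_simps)
  also have "\<dots> = 0" using modmat_delta[OF g] by simp
  finally show ?thesis using mu by simp
qed


lemma row:
  assumes g: "simple_graph V E"
    and eig: "\<forall>i\<in>V. (\<Sum>j\<in>V. modmat V E i j * v j) = \<mu> * v i"
    and mu: "\<mu> > 0" and i: "i \<in> V"
  shows "\<mu> * (v i)^2 = (\<Sum>j\<in>V. adj E i j * v i * v j / (sqrt (deg V E i) * sqrt (deg V E j)))"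
proof -
  have o: "(\<Sum>j\<in>V. sqrt (deg V E j) * v j) = 0" using orth[OF g eig mu] .
  have "(\<Sum>j\<in>V. modmat V E i j * v j) =
     (\<Sum>j\<in>V. adj E i j * v j / (sqrt (deg V E i) * sqrt (deg V E j)))
      - sqrt (deg V E i) / vol V E V * (\<Sum>j\<in>V. sqrt (deg V E j) * v j)"
    unfolding modmat_def by (simp add: sum_subtractf sum_distrib_left algebra_simps)
  then have "\<mu> * v i = (\<Sum>j\<in>V. adj E i j * v j / (sqrt (deg V E i) * sqrt (deg V E j)))"
    using eig i o by simp
  then have "\<mu> * (v i)^2 = v i * (\<Sum>j\<in>V. adj E i j * v j / (sqrt (deg V E i) * sqrt (deg V E j)))"
    by (simp add: power2_eq_square algebra_simps)
  also have "\<dots> = (\<Sum>j\<in>V. adj E i j * v i * v j / (sqrt (deg V E i) * sqrt (deg V E j)))"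
    by (simp add: sum_distrib_left algebra_simps)
  finally show ?thesis .
qed

lemma term_bound:
  assumes fin: "finite V" and i: "i \<in> V" and j: "j \<in> V"
  shows "adj E i j * v i * v j / (sqrt (deg V E i) * sqrt (deg V E j))
     \<le> Max ((\<lambda>i. (v i)^2 / deg V E i) ` V) * adj E i j"
proof -
  let ?m = "Max ((\<lambda>i. (v i)^2 / deg V E i) ` V)"
  have r: "\<bar>v k\<bar> / sqrt (deg V E k) \<le> sqrt ?m" if "k \<in> V" for k
  proof -
    have "\<bar>v k\<bar> / sqrt (deg V E k) = sqrt ((v k)^2 / deg V E k)"
      by (simp add: real_sqrt_divide)
    also have "\<dots> \<le> sqrt ?m" using fin that by (intro real_sqrt_le_mono Max_ge) auto
    finally show ?thesis .
  qed
  have m0: "?m \<ge> 0"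
  proof -
    have "(v i)^2 / deg V E i \<le> ?m" using fin i by (intro Max_ge) auto
    moreover have "(v i)^2 / deg V E i \<ge> 0" using deg_nonneg[of V E i] by simp
    ultimately show ?thesis by linarith
  qed
  show ?thesis
  proof (cases "adj E i j = 0")
    case True then show ?thesis by simp
  next
    case False
    then have a: "adj E i j = 1" using adj_cases by metis
    have "v i * v j / (sqrt (deg V E i) * sqrt (deg V E j))
       \<le> \<bar>v i * v j\<bar> / (sqrt (deg V E i) * sqrt (deg V E j))"
      by (intro divide_right_mono) (auto simp: deg_nonneg)
    also have "\<dots> = (\<bar>v i\<bar> / sqrt (deg V E i)) * (\<bar>v j\<bar> / sqrt (deg V E j))"
      by (simp add: abs_mult)
    also have "\<dots> \<le> sqrt ?m * sqrt ?m"
      using r[OF i] r[OF j] m0 by (intro mult_mono) (auto simp: deg_nonneg)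
    also have "\<dots> = ?m" using m0 by simp
    finally show ?thesis using a by simp
  qed
qed

theorem theorem5p1:
  fixes V :: "'a set" and E :: "'a \<Rightarrow> 'a \<Rightarrow> bool" and v :: "'a \<Rightarrow> real" and \<mu> :: real
  assumes "connected_graph V E"
    and "\<forall>i\<in>V. (\<Sum>j\<in>V. modmat V E i j * v j) = \<mu> * v i"
    and "\<mu> > 0"
    and "sqrt (\<Sum>i\<in>V. (v i)^2) = 1"
    and "S = {i\<in>V. v i \<ge> 0}"
    and "\<mu> > ((vol V E S)^2 + (vol V E (V - S))^2) / vol V E V
              * Max ((\<lambda>i. (v i)^2 / deg V E i) ` V)"
  shows "modularity V E S > 0"
proof -
  have g: "simple_graph V E" using assms(1) unfolding connected_graph_def by auto
  have fin: "finite V" and ne: "V \<noteq> {}" using g unfolding simple_graph_def by auto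
  have SV: "S \<subseteq> V" using assms(5) by auto
  have finS: "finite S" using fin SV finite_subset by blast
  define m where "m = Max ((\<lambda>i. (v i)^2 / deg V E i) ` V)"
  define T where "T = (\<lambda>i j. adj E i j * v i * v j / (sqrt (deg V E i) * sqrt (deg V E j)))"
  define eS where "eS = (\<Sum>i\<in>S. \<Sum>j\<in>S. adj E i j)"
  define eR where "eR = (\<Sum>i\<in>V-S. \<Sum>j\<in>V-S. adj E i j)"
  have m0: "m \<ge> 0"
  proof -
    obtain x where x: "x \<in> V" using ne by auto
    have "(v x)^2 / deg V E x \<le> m" unfolding m_def using fin x by (intro Max_ge) auto
    moreover have "(v x)^2 / deg V E x \<ge> 0" using deg_nonneg[of V E x] by simp
    ultimately show ?thesis by linarith
  qed
  have rowT: "\<mu> * (v i)^2 = (\<Sum>j\<in>V. T i j)" if "i \<in> V" for i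
    unfolding T_def using row[OF g assms(2) assms(3) that] .
  have tb: "T i j \<le> m * adj E i j" if "i \<in> V" "j \<in> V" for i j
    unfolding T_def m_def using term_bound[OF fin that] .
  have neg: "T i j \<le> 0" if "v i * v j \<le> 0" for i j
  proof -
    have "adj E i j * v i * v j \<le> 0" using that adj_nonneg[of E i j]
      by (metis mult.assoc mult_nonneg_nonpos)
    then show ?thesis unfolding T_def
      by (intro divide_nonpos_nonneg) (auto simp: deg_nonneg)
  qed
  have split: "(\<Sum>j\<in>V. f j) = (\<Sum>j\<in>S. f j) + (\<Sum>j\<in>V-S. f j)" for f :: "'a \<Rightarrow> real"
    using sum.subset_diff[OF SV fin, of f] by simp
  have A: "\<mu> * (\<Sum>i\<in>S. (v i)^2) \<le> m * eS"
  proof -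
    have "\<mu> * (\<Sum>i\<in>S. (v i)^2) = (\<Sum>i\<in>S. \<Sum>j\<in>V. T i j)"
      using rowT SV by (auto simp: sum_distrib_left intro!: sum.cong)
    also have "\<dots> = (\<Sum>i\<in>S. (\<Sum>j\<in>S. T i j) + (\<Sum>j\<in>V-S. T i j))"
      using split by simp
    also have "\<dots> \<le> (\<Sum>i\<in>S. (\<Sum>j\<in>S. T i j) + 0)"
    proof (intro sum_mono add_left_mono)
      fix i assume "i \<in> S"
      then show "(\<Sum>j\<in>V-S. T i j) \<le> 0" using assms(5)
        by (intro sum_nonpos neg) (auto simp: mult_nonneg_nonpos)
    qed
    also have "\<dots> \<le> (\<Sum>i\<in>S. \<Sum>j\<in>S. m * adj E i j)"
      using SV tb by (auto intro!: sum_mono)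
    also have "\<dots> = m * eS" unfolding eS_def by (simp add: sum_distrib_left)
    finally show ?thesis .
  qed
  have B: "\<mu> * (\<Sum>i\<in>V-S. (v i)^2) \<le> m * eR"
  proof -
    have "\<mu> * (\<Sum>i\<in>V-S. (v i)^2) = (\<Sum>i\<in>V-S. \<Sum>j\<in>V. T i j)"
      using rowT by (auto simp: sum_distrib_left intro!: sum.cong)
    also have "\<dots> = (\<Sum>i\<in>V-S. (\<Sum>j\<in>V-S. T i j) + (\<Sum>j\<in>S. T i j))"
      using split by (simp add: add.commute)
    also have "\<dots> \<le> (\<Sum>i\<in>V-S. (\<Sum>j\<in>V-S. T i j) + 0)"
    proof (intro sum_mono add_left_mono)
      fix i assume "i \<in> V-S"
      then show "(\<Sum>j\<in>S. T i j) \<le> 0" using assms(5)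
        by (intro sum_nonpos neg) (auto simp: mult_nonpos_nonneg)
    qed
    also have "\<dots> \<le> (\<Sum>i\<in>V-S. \<Sum>j\<in>V-S. m * adj E i j)"
      using tb by (auto intro!: sum_mono)
    also have "\<dots> = m * eR" unfolding eR_def by (simp add: sum_distrib_left)
    finally show ?thesis .
  qed
  have one: "(\<Sum>i\<in>V. (v i)^2) = 1" using assms(4) by simp
  have "\<mu> = \<mu> * (\<Sum>i\<in>S. (v i)^2) + \<mu> * (\<Sum>i\<in>V-S. (v i)^2)"
    using one split[of "\<lambda>i. (v i)^2"] by (simp add: distrib_left[symmetric])
  then have mu_le: "\<mu> \<le> m * (eS + eR)" using A B by (simp add: algebra_simps)
  define x where "x = vol V E S"
  define y where "y = vol V E (V - S)"
  define W where "W = vol V E V"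
  have W: "W = x + y" unfolding W_def x_def y_def vol_def using split by simp
  define K where "K = (x^2 + y^2) / W"
  have "K * m < m * (eS + eR)" using assms(6) mu_le unfolding K_def x_def y_def W_def m_def
    by linarith
  then have KE: "K < eS + eR" using m0
    by (metis mult.commute mult_le_cancel_left_pos not_le order_less_le mult_zero_left less_irrefl)
  \<comment> \<open>Q(S) = Q(V-S)\<close>
  define c where "c = (\<Sum>i\<in>S. \<Sum>j\<in>V-S. adj E i j)"
  define c' where "c' = (\<Sum>i\<in>V-S. \<Sum>j\<in>S. adj E i j)"
  have "c' = (\<Sum>j\<in>S. \<Sum>i\<in>V-S. adj E i j)" unfolding c'_def by (rule sum.swap)
  also have "\<dots> = c" unfolding c_def using adj_sym[OF g] by simp
  finally have cc: "c' = c" .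
  have xe: "x = eS + c" unfolding x_def vol_def deg_def eS_def c_def
    using split by (simp add: sum.distrib)
  have ye: "y = eR + c'" unfolding y_def vol_def deg_def eR_def c'_def
    using split by (simp add: sum.distrib add.commute)
  have x0: "x \<ge> 0" unfolding x_def vol_def by (simp add: sum_nonneg deg_nonneg)
  have y0: "y \<ge> 0" unfolding y_def vol_def by (simp add: sum_nonneg deg_nonneg)
  have Q: "modularity V E S = eS - x^2 / W"
    unfolding modularity_def eS_def x_def W_def ..
  have QQ: "eS - x^2 / W = eR - y^2 / W"
  proof (cases "W = 0")
    case True
    then have "x = 0" "y = 0" using W x0 y0 by auto
    then show ?thesis using True xe ye cc by simp
  next
    case False
    have "x^2 / W - y^2 / W = (x - y) * (x + y) / W" by (simp add: power2_eq_square algebra_simps diff_divide_distrib)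
    also have "\<dots> = x - y" using False W by simp
    finally show ?thesis using xe ye cc by simp
  qed
  have "2 * modularity V E S = eS + eR - K"
    unfolding Q K_def using QQ by (simp add: add_divide_distrib)
  then show ?thesis using KE by simp
qed

end
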